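(* Let $A,B$ be Hermitian matrices of the same size, let $H=i[A,B]$, and for real $t$ let $S(t)=e^{itB}e^{itA}e^{-itB}e^{-itA}$. Then for every $\Delta t\ge0$, $$\Big\|S\big(\sqrt{\Delta t/2}\big)\,S\big(-\sqrt{\Delta t/2}\big)-e^{-iH\Delta t}\Big\|\le\Big[\frac83\big(\|A\|+\|B\|\big)^4+\frac12\|H\|^2\Big]\Delta t^2,$$ where $\|\cdot\|$ is the spectral norm. *)

theory Defs
  imports "HOL-Analysis.Analysis"
begin

definition hermitian_mat :: "complex^'n^'n \<Rightarrow> bool" where
  "hermitian_mat A \<longleftrightarrow> (\<forall>i j. A $ i $ j = cnj (A $ j $ i))"

definition cmat_scale :: "complex \<Rightarrow> complex^'n^'n \<Rightarrow> complex^'n^'n" where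
  "cmat_scale c A = (\<chi> i j. c * A $ i $ j)"

fun mat_pow :: "complex^'n^'n \<Rightarrow> nat \<Rightarrow> complex^'n^'n" where
  "mat_pow A 0 = mat 1"
| "mat_pow A (Suc k) = A ** mat_pow A k"

definition mat_exp :: "complex^'n^'n \<Rightarrow> complex^'n^'n" where
  "mat_exp A = (\<Sum>k. (1 / fact k) *\<^sub>R mat_pow A k)"

definition spec_norm :: "complex^'n^'n \<Rightarrow> real" where
  "spec_norm A = onorm (\<lambda>x::complex^'n. A *v x)"

end

theory Submission
  imports Defs
begin
lemma deriv_pow_fact: "((\<lambda>u. u^(Suc k) / fact (Suc k)) has_real_derivative (u^k / fact k)) (at u within S)"
proof -
  have "((\<lambda>u. u^(Suc k) / fact (Suc k)) has_real_derivative (real (Suc k) * u^k / fact (Suc k))) (at u within S)"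
    using DERIV_cdivide[OF DERIV_pow[of "Suc k" u S], of "fact (Suc k)"] by simp
  moreover have "real (Suc k) * u^k / fact (Suc k) = u^k / fact k"
    by (simp add: fact_Suc del: of_nat_Suc)
  ultimately show ?thesis by simp
qed

lemma exp_taylor_contr:
  fixes G :: "'a::{real_normed_algebra_1,banach}"
  assumes contr: "\<And>u. u \<ge> 0 \<Longrightarrow> norm (exp (u *\<^sub>R G)) \<le> 1"
  shows "s \<ge> 0 \<Longrightarrow> norm (exp (s *\<^sub>R G) - (\<Sum>k<j. (s^k / fact k) *\<^sub>R G^k)) \<le> (s * norm G)^j / fact j"
proof (induction j arbitrary: s)
  case 0
  then show ?case using contr by simp
next
  case (Suc j)
  define R where "R = (\<lambda>j u. exp (u *\<^sub>R G) - (\<Sum>k<j. (u^k / fact k) *\<^sub>R G^k))"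
  have sumrw: "(\<Sum>k<Suc j. (u^k / fact k) *\<^sub>R G^k) = 1 + (\<Sum>k<j. (u^(Suc k) / fact (Suc k)) *\<^sub>R G^(Suc k))" for u :: real
    by (subst sum.lessThan_Suc_shift) simp
  have der: "((R (Suc j)) has_vector_derivative (G * R j u)) (at u within {0..s})" for u
  proof -
    have d1: "((\<lambda>u. (u^(Suc k) / fact (Suc k)) *\<^sub>R G^(Suc k)) has_vector_derivative ((u^k / fact k) *\<^sub>R G^(Suc k))) (at u within {0..s})" for k
    proof -
      have "((\<lambda>u. u^(Suc k) / fact (Suc k)) has_real_derivative (real (Suc k) * u^k / fact (Suc k))) (at u within {0..s})"
        using DERIV_cdivide[OF DERIV_pow[of "Suc k" u "{0..s}"], of "fact (Suc k)"] by simp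
      moreover have "real (Suc k) * u^k / fact (Suc k) = u^k / fact k"
        by (simp add: fact_Suc del: of_nat_Suc)
      ultimately have "((\<lambda>u. u^(Suc k) / fact (Suc k)) has_real_derivative (u^k / fact k)) (at u within {0..s})"
        by simp
      then show ?thesis
        using has_vector_derivative_scaleR[OF _ has_vector_derivative_const] by fastforce
    qed
    have "((R (Suc j)) has_vector_derivative (exp (u *\<^sub>R G) * G - (0 + (\<Sum>k<j. (u^k / fact k) *\<^sub>R G^(Suc k))))) (at u within {0..s})"
      unfolding R_def sumrw
      by (intro has_vector_derivative_diff has_vector_derivative_add has_vector_derivative_sum
          exp_scaleR_has_vector_derivative_right d1 has_vector_derivative_const)
    moreover have "exp (u *\<^sub>R G) * G - (0 + (\<Sum>k<j. (u^k / fact k) *\<^sub>R G^(Suc k))) = G * R j u"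
      unfolding R_def by (simp add: exp_times_scaleR_commute right_diff_distrib sum_distrib_left mult_scaleR_right)
    ultimately show ?thesis by simp
  qed
  have int1: "((\<lambda>u. G * R j u) has_integral (R (Suc j) s - R (Suc j) 0)) {0..s}"
    by (rule fundamental_theorem_of_calculus) (use Suc.prems der in auto)
  have R0: "R (Suc j) 0 = 0"
    unfolding R_def sumrw by simp
  have int2: "((\<lambda>u. norm G^(Suc j) * (u^j / fact j)) has_integral (norm G^(Suc j) * (s^(Suc j) / fact (Suc j)) - norm G^(Suc j) * (0^(Suc j) / fact (Suc j)))) {0..s}"
    apply (rule fundamental_theorem_of_calculus)
    using Suc.prems apply simp
    apply (rule has_real_derivative_iff_has_vector_derivative[THEN iffD1])
    apply (rule DERIV_cmult)
    apply (rule deriv_pow_fact)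
    done
  have bnd: "norm (G * R j u) \<le> norm G^(Suc j) * (u^j / fact j)" if "u \<in> {0..s}" for u
  proof -
    have "norm (G * R j u) \<le> norm G * norm (R j u)" by (rule norm_mult_ineq)
    also have "\<dots> \<le> norm G * ((u * norm G)^j / fact j)"
      using Suc.IH[of u] that unfolding R_def by (intro mult_left_mono) auto
    finally show ?thesis by (simp add: power_mult_distrib field_simps)
  qed
  have "norm (integral {0..s} (\<lambda>u. G * R j u)) \<le> integral {0..s} (\<lambda>u. norm G^(Suc j) * (u^j / fact j))"
    using integral_norm_bound_integral[OF has_integral_integrable[OF int1] has_integral_integrable[OF int2] bnd] .
  then have "norm (R (Suc j) s) \<le> norm G^(Suc j) * (s^(Suc j) / fact (Suc j))"
    unfolding integral_unique[OF int1] integral_unique[OF int2] R0 by simp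
  moreover have "norm G^(Suc j) * (s^(Suc j) / fact (Suc j)) = (s * norm G)^(Suc j) / fact (Suc j)"
    by (simp only: power_mult_distrib times_divide_eq_right mult.commute)
  ultimately have "norm (R (Suc j) s) \<le> (s * norm G)^(Suc j) / fact (Suc j)" by (simp only:)
  then show ?case unfolding R_def .
qed

lemma binom_fact_sum:
  fixes a b :: real
  shows "(\<Sum>i\<le>k. a^i / fact i * (b^(k-i) / fact (k-i))) = (a+b)^k / fact k"
proof -
  have "(a+b)^k = (\<Sum>i\<le>k. of_nat (k choose i) * a^i * b^(k-i))"
    by (rule binomial_ring)
  also have "\<dots> = (\<Sum>i\<le>k. fact k * (a^i / fact i * (b^(k-i) / fact (k-i))))"
    by (intro sum.cong refl) (simp add: binomial_fact field_simps)
  also have "\<dots> = fact k * (\<Sum>i\<le>k. a^i / fact i * (b^(k-i) / fact (k-i)))"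
    by (simp add: sum_distrib_left)
  finally show ?thesis by simp
qed

lemma sum_triangle_lt:
  fixes g :: "nat \<Rightarrow> nat \<Rightarrow> 'a::comm_monoid_add"
  shows "(\<Sum>i<m. \<Sum>l<m-i. g i l) = (\<Sum>k<m. \<Sum>i\<le>k. g i (k-i))"
proof -
  have "{(i,j). i+j < m} = Sigma {..<m} (\<lambda>i. {..<m-i})" by auto
  then have "(\<Sum>(i,j)\<in>{(i,j). i+j < m}. g i j) = (\<Sum>i<m. \<Sum>l<m-i. g i l)"
    by (simp add: sum.Sigma)
  then show ?thesis using sum.triangle_reindex[of g m] by simp
qed

definition cp :: "(nat \<Rightarrow> 'a::ring_1) \<Rightarrow> (nat \<Rightarrow> 'a) \<Rightarrow> nat \<Rightarrow> 'a" where
  "cp c d k = (\<Sum>i\<le>k. c i * d (k - i))"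

definition tay :: "(real \<Rightarrow> 'a::real_normed_algebra_1) \<Rightarrow> (nat \<Rightarrow> 'a) \<Rightarrow> real \<Rightarrow> bool" where
  "tay F c M \<longleftrightarrow> M \<ge> 0 \<and> (\<forall>s\<ge>0. norm (F s) \<le> 1) \<and> (\<forall>k. norm (c k) \<le> M^k / fact k) \<and>
     (\<forall>j s. s \<ge> 0 \<longrightarrow> norm (F s - (\<Sum>k<j. s^k *\<^sub>R c k)) \<le> (M * s)^j / fact j)"

lemma tay_mult:
  fixes F G :: "real \<Rightarrow> 'a::real_normed_algebra_1"
  assumes tF: "tay F c M" and tG: "tay G d N"
  shows "tay (\<lambda>s. F s * G s) (cp c d) (M + N)"
proof -
  from tF have M0: "M \<ge> 0" and F1: "\<And>s. s \<ge> 0 \<Longrightarrow> norm (F s) \<le> 1"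
    and cb: "\<And>k. norm (c k) \<le> M^k / fact k"
    and Fr: "\<And>j s. s \<ge> 0 \<Longrightarrow> norm (F s - (\<Sum>k<j. s^k *\<^sub>R c k)) \<le> (M * s)^j / fact j"
    unfolding tay_def by auto
  from tG have N0: "N \<ge> 0" and G1: "\<And>s. s \<ge> 0 \<Longrightarrow> norm (G s) \<le> 1"
    and db: "\<And>k. norm (d k) \<le> N^k / fact k"
    and Gr: "\<And>j s. s \<ge> 0 \<Longrightarrow> norm (G s - (\<Sum>k<j. s^k *\<^sub>R d k)) \<le> (N * s)^j / fact j"
    unfolding tay_def by auto
  have P1: "norm (F s * G s) \<le> 1" if "s \<ge> 0" for s
    using norm_mult_ineq[of "F s" "G s"] F1[OF that] G1[OF that] norm_ge_zero[of "G s"]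
    by (smt (verit) mult_left_le_one_le norm_ge_zero)
  have P2: "norm (cp c d k) \<le> (M+N)^k / fact k" for k
  proof -
    have "norm (cp c d k) \<le> (\<Sum>i\<le>k. norm (c i * d (k - i)))"
      unfolding cp_def by (rule norm_sum)
    also have "\<dots> \<le> (\<Sum>i\<le>k. M^i / fact i * (N^(k-i) / fact (k-i)))"
    proof (intro sum_mono)
      fix i
      have "norm (c i * d (k - i)) \<le> norm (c i) * norm (d (k-i))" by (rule norm_mult_ineq)
      also have "\<dots> \<le> M^i / fact i * (N^(k-i) / fact (k-i))"
        by (intro mult_mono cb db) (auto simp: M0)
      finally show "norm (c i * d (k - i)) \<le> M^i / fact i * (N^(k-i) / fact (k-i))" .
    qed
    also have "\<dots> = (M+N)^k / fact k" by (rule binom_fact_sum)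
    finally show ?thesis .
  qed
  have P3: "norm (F s * G s - (\<Sum>k<m. s^k *\<^sub>R cp c d k)) \<le> ((M+N) * s)^m / fact m" if s0: "s \<ge> 0" for m s
  proof -
    define RF where "RF = F s - (\<Sum>i<m. s^i *\<^sub>R c i)"
    define RG where "RG = (\<lambda>i. G s - (\<Sum>l<m-i. s^l *\<^sub>R d l))"
    have "(\<Sum>k<m. s^k *\<^sub>R cp c d k) = (\<Sum>k<m. \<Sum>i\<le>k. (s^i *\<^sub>R c i) * (s^(k-i) *\<^sub>R d (k-i)))"
      unfolding cp_def
      by (intro sum.cong refl) (simp add: scaleR_sum_right power_add[symmetric])
    also have "\<dots> = (\<Sum>i<m. \<Sum>l<m-i. (s^i *\<^sub>R c i) * (s^l *\<^sub>R d l))"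
      by (rule sum_triangle_lt[symmetric])
    finally have eq1: "(\<Sum>k<m. s^k *\<^sub>R cp c d k) = (\<Sum>i<m. (s^i *\<^sub>R c i) * (\<Sum>l<m-i. s^l *\<^sub>R d l))"
      by (simp add: sum_distrib_left)
    have "F s * G s - (\<Sum>k<m. s^k *\<^sub>R cp c d k) = (\<Sum>i<m. (s^i *\<^sub>R c i) * RG i) + RF * G s"
      unfolding eq1 RF_def RG_def
      by (simp add: right_diff_distrib left_diff_distrib sum_subtractf sum_distrib_right algebra_simps)
    also have "norm \<dots> \<le> (\<Sum>i<m. norm ((s^i *\<^sub>R c i) * RG i)) + norm (RF * G s)"
      by (intro order.trans[OF norm_triangle_ineq] add_mono norm_sum order.refl)
    also have "\<dots> \<le> (\<Sum>i<m. (M * s)^i / fact i * ((N * s)^(m-i) / fact (m-i))) + (M * s)^m / fact m * ((N * s)^(m-m) / fact (m-m))"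
    proof (intro add_mono sum_mono)
      fix i
      have "norm ((s^i *\<^sub>R c i) * RG i) \<le> norm (s^i *\<^sub>R c i) * norm (RG i)" by (rule norm_mult_ineq)
      also have "\<dots> \<le> (M * s)^i / fact i * ((N * s)^(m-i) / fact (m-i))"
      proof (intro mult_mono)
        show "norm (s^i *\<^sub>R c i) \<le> (M * s)^i / fact i"
          using cb[of i] s0 by (simp add: power_mult_distrib divide_simps) (metis mult.commute mult.left_commute mult_left_mono zero_le_power)
        show "norm (RG i) \<le> (N * s)^(m-i) / fact (m-i)" unfolding RG_def by (rule Gr[OF s0])
      qed (use M0 s0 in auto)
      finally show "norm ((s^i *\<^sub>R c i) * RG i) \<le> (M * s)^i / fact i * ((N * s)^(m-i) / fact (m-i))" .
    next
      have "norm (RF * G s) \<le> norm RF * norm (G s)" by (rule norm_mult_ineq)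
      also have "\<dots> \<le> (M * s)^m / fact m * 1"
        by (intro mult_mono) (use Fr[OF s0, of m] G1[OF s0] M0 s0 in \<open>auto simp: RF_def\<close>)
      finally show "norm (RF * G s) \<le> (M * s)^m / fact m * ((N * s)^(m-m) / fact (m-m))" by simp
    qed
    also have "\<dots> = (\<Sum>i\<le>m. (M * s)^i / fact i * ((N * s)^(m-i) / fact (m-i)))"
      by (simp add: lessThan_Suc_atMost[symmetric])
    also have "\<dots> = (M * s + N * s)^m / fact m" by (rule binom_fact_sum)
    finally show ?thesis by (simp add: distrib_right)
  qed
  show ?thesis unfolding tay_def using M0 N0 P1 P2 P3 by auto
qed

lemma cp_coeffs:
  fixes p q :: "nat \<Rightarrow> 'a::real_algebra_1"
  assumes p0: "p 0 = 1" and q: "\<And>k. q k = (-1)^k *\<^sub>R p k"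
  shows "cp (cp p q) (cp q p) 0 = 1" "cp (cp p q) (cp q p) 1 = 0"
    "cp (cp p q) (cp q p) 2 = 2 *\<^sub>R (2 *\<^sub>R p 2 - p 1 * p 1)" "cp (cp p q) (cp q p) 3 = 0"
  by (simp_all add: cp_def q p0 eval_nat_numeral algebra_simps scaleR_2)

definition ec :: "'a::real_normed_algebra_1 \<Rightarrow> nat \<Rightarrow> 'a" where
  "ec G k = G^k /\<^sub>R fact k"

lemma tay_exp:
  fixes G :: "'a::{real_normed_algebra_1,banach}"
  assumes contr: "\<And>u. u \<ge> 0 \<Longrightarrow> norm (exp (u *\<^sub>R G)) \<le> 1"
  shows "tay (\<lambda>s. exp (s *\<^sub>R G)) (ec G) (norm G)"
  unfolding tay_def
proof (intro conjI allI impI)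
  show "norm (ec G k) \<le> norm G ^ k / fact k" for k
  proof -
    have "norm (ec G k) = norm (G^k) / fact k" unfolding ec_def by (simp add: field_simps)
    also have "\<dots> \<le> norm G ^ k / fact k" by (intro divide_right_mono norm_power_ineq) simp
    finally show ?thesis .
  qed
  show "norm (exp (s *\<^sub>R G) - (\<Sum>k<j. s ^ k *\<^sub>R ec G k)) \<le> (norm G * s) ^ j / fact j"
    if "s \<ge> 0" for j s
  proof -
    have "(\<Sum>k<j. s ^ k *\<^sub>R ec G k) = (\<Sum>k<j. (s^k / fact k) *\<^sub>R G^k)"
      by (simp add: ec_def divide_inverse)
    moreover have "norm G * s = s * norm G" by (rule mult.commute)
    ultimately show ?thesis using exp_taylor_contr[OF contr that, of j] by (simp only:)
  qed
qed (use contr in auto)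

lemma pow_neg_scaleR: "(-G)^k = ((-1::real)^k) *\<^sub>R (G::'a::real_algebra_1)^k"
proof -
  have "(-G)^k = (-1)^k * G^k" by (rule power_minus)
  also have "(-1::'a)^k = of_real ((-1::real)^k)" by (simp only: of_real_power of_real_minus of_real_1)
  finally show ?thesis by (simp only: scaleR_conv_of_real)
qed

lemma ec_neg: "ec (-G) k = (-1)^k *\<^sub>R ec G k"
  unfolding ec_def by (subst pow_neg_scaleR) (simp only: scaleR_scaleR mult.commute)

lemma ec_neg_fun: "ec (-G) = (\<lambda>k. (-1)^k *\<^sub>R ec G k)"
  by (rule ext) (rule ec_neg)

lemma cp_neg:
  fixes a b :: "nat \<Rightarrow> 'a::real_algebra_1"
  shows "cp (\<lambda>k. (-1)^k *\<^sub>R a k) (\<lambda>k. (-1)^k *\<^sub>R b k) k = (-1)^k *\<^sub>R cp a b k"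
  unfolding cp_def scaleR_sum_right
proof (intro sum.cong refl)
  fix i assume "i \<in> {..k}"
  then have "(-1::real)^i * (-1)^(k-i) = (-1)^k" by (simp add: power_add[symmetric])
  show "((-1)^i *\<^sub>R a i) * ((-1)^(k-i) *\<^sub>R b (k-i)) = (-1)^k *\<^sub>R (a i * b (k - i))"
  proof -
    have "((-1)^i *\<^sub>R a i) * ((-1)^(k-i) *\<^sub>R b (k-i)) = ((-1::real)^i * (-1)^(k-i)) *\<^sub>R (a i * b (k-i))"
      by (simp only: mult_scaleR_left mult_scaleR_right scaleR_scaleR mult.commute)
    then show ?thesis using \<open>(-1::real)^i * (-1)^(k-i) = (-1)^k\<close> by simp
  qed
qed

lemma tay_rem4:
  assumes "tay F c M" "s \<ge> 0"
  shows "norm (F s - (\<Sum>k<4. s^k *\<^sub>R c k)) \<le> (M * s)^4 / fact 4"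
proof -
  from assms(1) have h: "\<forall>j s. s \<ge> 0 \<longrightarrow> norm (F s - (\<Sum>k<j. s^k *\<^sub>R c k)) \<le> (M * s)^j / fact j"
    unfolding tay_def by (elim conjE)
  show ?thesis using h[rule_format, OF assms(2)] .
qed

theorem abstract_main:
  fixes X Y :: "'a::{real_normed_algebra_1,banach}"
  assumes cX: "\<And>u. norm (exp (u *\<^sub>R X)) \<le> 1" and cY: "\<And>u. norm (exp (u *\<^sub>R Y)) \<le> 1"
    and cD: "\<And>u. u \<ge> 0 \<Longrightarrow> norm (exp (u *\<^sub>R (Y*X - X*Y))) \<le> 1" and s0: "s \<ge> 0"
  shows "norm ((exp (s *\<^sub>R Y) * exp (s *\<^sub>R X) * exp ((-s) *\<^sub>R Y) * exp ((-s) *\<^sub>R X)) *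
               (exp ((-s) *\<^sub>R Y) * exp ((-s) *\<^sub>R X) * exp (s *\<^sub>R Y) * exp (s *\<^sub>R X))
               - exp ((2 * s^2) *\<^sub>R (Y*X - X*Y)))
         \<le> 32/3 * (norm X + norm Y)^4 * s^4 + 2 * s^4 * (norm (Y*X - X*Y))^2"
proof -
  define D where "D = Y*X - X*Y"
  define p where "p = cp (ec Y) (ec X)"
  define q where "q = cp (ec (-Y)) (ec (-X))"
  have q: "q k = (-1)^k *\<^sub>R p k" for k
    unfolding q_def p_def using cp_neg[of "ec Y" "ec X" k] by (simp add: ec_neg_fun)
  have p0: "p 0 = 1" unfolding p_def cp_def ec_def by simp
  have p1: "p 1 = Y + X" unfolding p_def cp_def ec_def by simp
  have p2: "p 2 = X^2 /\<^sub>R 2 + Y * X + Y^2 /\<^sub>R 2"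
    unfolding p_def cp_def ec_def by (simp add: eval_nat_numeral)
  have pD: "2 *\<^sub>R p 2 - p 1 * p 1 = D"
    unfolding p1 p2 D_def by (simp add: algebra_simps scaleR_2 power2_eq_square)
  have cnY: "\<And>u. norm (exp (u *\<^sub>R (-Y))) \<le> 1" using cY by (metis scaleR_minus_right scaleR_minus_left)
  have cnX: "\<And>u. norm (exp (u *\<^sub>R (-X))) \<le> 1" using cX by (metis scaleR_minus_right scaleR_minus_left)
  have tP: "tay (\<lambda>s. exp (s *\<^sub>R Y) * exp (s *\<^sub>R X)) p (norm Y + norm X)"
    unfolding p_def by (intro tay_mult tay_exp cX cY)
  have tQ: "tay (\<lambda>s. exp (s *\<^sub>R (-Y)) * exp (s *\<^sub>R (-X))) q (norm Y + norm X)"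
    unfolding q_def using tay_mult[OF tay_exp[OF cnY] tay_exp[OF cnX]] by simp
  have tW: "tay (\<lambda>s. (exp (s *\<^sub>R Y) * exp (s *\<^sub>R X)) * (exp (s *\<^sub>R (-Y)) * exp (s *\<^sub>R (-X))) *
                  ((exp (s *\<^sub>R (-Y)) * exp (s *\<^sub>R (-X))) * (exp (s *\<^sub>R Y) * exp (s *\<^sub>R X))))
           (cp (cp p q) (cp q p)) (((norm Y + norm X) + (norm Y + norm X)) + ((norm Y + norm X) + (norm Y + norm X)))"
    by (intro tay_mult tP tQ)
  have sum4: "(\<Sum>k<4. s^k *\<^sub>R cp (cp p q) (cp q p) k) = 1 + (2 * s^2) *\<^sub>R D"
  proof -
    have e4: "(\<Sum>k<4. f k) = f 0 + f 1 + f 2 + f 3" for f :: "nat \<Rightarrow> 'a"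
      by (simp add: numeral_eq_Suc add.assoc)
    have "(\<Sum>k<4. s^k *\<^sub>R cp (cp p q) (cp q p) k) = 1 + (s^2) *\<^sub>R (2 *\<^sub>R (2 *\<^sub>R p 2 - p 1 * p 1))"
      unfolding e4 cp_coeffs[OF p0 q] by simp
    then show ?thesis unfolding pD by simp
  qed
  have E1: "norm ((exp (s *\<^sub>R Y) * exp (s *\<^sub>R X)) * (exp (s *\<^sub>R (-Y)) * exp (s *\<^sub>R (-X))) *
                  ((exp (s *\<^sub>R (-Y)) * exp (s *\<^sub>R (-X))) * (exp (s *\<^sub>R Y) * exp (s *\<^sub>R X))) - (1 + (2 * s^2) *\<^sub>R D))
     \<le> (4 * (norm X + norm Y) * s)^4 / fact 4"
  proof -
    have Meq: "((norm Y + norm X) + (norm Y + norm X)) + ((norm Y + norm X) + (norm Y + norm X)) = 4 * (norm X + norm Y)"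
      by simp
    show ?thesis using tay_rem4[OF tW s0] unfolding sum4 Meq .
  qed
  have E2: "norm (exp ((2 * s^2) *\<^sub>R D) - (1 + (2 * s^2) *\<^sub>R D)) \<le> ((2 * s^2) * norm D)^2 / fact 2"
    using exp_taylor_contr[of D "2 * s^2" 2] cD s0 unfolding D_def
    by (simp add: eval_nat_numeral)
  have eqW: "(exp (s *\<^sub>R Y) * exp (s *\<^sub>R X) * exp ((-s) *\<^sub>R Y) * exp ((-s) *\<^sub>R X)) *
               (exp ((-s) *\<^sub>R Y) * exp ((-s) *\<^sub>R X) * exp (s *\<^sub>R Y) * exp (s *\<^sub>R X)) =
        (exp (s *\<^sub>R Y) * exp (s *\<^sub>R X)) * (exp (s *\<^sub>R (-Y)) * exp (s *\<^sub>R (-X))) *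
                  ((exp (s *\<^sub>R (-Y)) * exp (s *\<^sub>R (-X))) * (exp (s *\<^sub>R Y) * exp (s *\<^sub>R X)))"
    by (simp add: mult.assoc)
  let ?W = "(exp (s *\<^sub>R Y) * exp (s *\<^sub>R X)) * (exp (s *\<^sub>R (-Y)) * exp (s *\<^sub>R (-X))) *
                  ((exp (s *\<^sub>R (-Y)) * exp (s *\<^sub>R (-X))) * (exp (s *\<^sub>R Y) * exp (s *\<^sub>R X)))"
  have "norm (?W - exp ((2 * s^2) *\<^sub>R D)) \<le> norm (?W - (1 + (2 * s^2) *\<^sub>R D)) + norm (exp ((2 * s^2) *\<^sub>R D) - (1 + (2 * s^2) *\<^sub>R D))"
    by (rule norm_diff_triangle_le[OF order.refl], simp add: norm_minus_commute)
  also have "\<dots> \<le> (4 * (norm X + norm Y) * s)^4 / fact 4 + ((2 * s^2) * norm D)^2 / fact 2"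
    using E1 E2 by (rule add_mono)
  also have "\<dots> = 32/3 * (norm X + norm Y)^4 * s^4 + 2 * s^4 * (norm D)^2"
  proof -
    have a: "(4 * (norm X + norm Y) * s)^4 = 256 * (norm X + norm Y)^4 * s^4"
      unfolding power_mult_distrib by simp
    have b: "((2 * s^2) * norm D)^2 = 4 * s^4 * (norm D)^2"
      by (simp add: power_mult_distrib flip: power_mult)
    have c: "fact 4 = (24::real)" "fact 2 = (2::real)" by (simp_all add: fact_numeral)
    show ?thesis unfolding a b c by simp
  qed
  finally have fin: "norm (?W - exp ((2 * s^2) *\<^sub>R D)) \<le> 32/3 * (norm X + norm Y)^4 * s^4 + 2 * s^4 * (norm D)^2" .
  show ?thesis unfolding eqW using fin[unfolded D_def] .
qed

typedef ('n::finite) cm = "UNIV :: (complex^'n^'n) set" morphisms M Abs_cm by simp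

setup_lifting type_definition_cm

lemma mv_bl: "bounded_linear (\<lambda>x::complex^'n. A *v x)"
  by (rule matrix_vector_mul_bounded_linear)

lemma spec_norm_ge0: "spec_norm A \<ge> 0"
  unfolding spec_norm_def by (rule onorm_pos_le[OF mv_bl])

lemma spec_norm_bound: "norm (A *v x) \<le> spec_norm A * norm x"
  unfolding spec_norm_def by (rule onorm[OF mv_bl])

lemma spec_norm_le: "(\<And>x. norm (A *v x) \<le> b * norm x) \<Longrightarrow> spec_norm A \<le> b"
  unfolding spec_norm_def by (rule onorm_le)

lemma spec_norm_triangle: "spec_norm (A + B) \<le> spec_norm A + spec_norm B"
proof (rule spec_norm_le)
  fix x
  have "norm ((A + B) *v x) = norm (A *v x + B *v x)" by (simp add: matrix_vector_mult_add_rdistrib)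
  also have "\<dots> \<le> norm (A *v x) + norm (B *v x)" by (rule norm_triangle_ineq)
  also have "\<dots> \<le> spec_norm A * norm x + spec_norm B * norm x"
    by (intro add_mono spec_norm_bound)
  finally show "norm ((A + B) *v x) \<le> (spec_norm A + spec_norm B) * norm x" by (simp add: algebra_simps)
qed

lemma spec_norm_mult: "spec_norm (A ** B) \<le> spec_norm A * spec_norm B"
proof (rule spec_norm_le)
  fix x
  have "norm ((A ** B) *v x) = norm (A *v (B *v x))" by (simp add: matrix_vector_mul_assoc)
  also have "\<dots> \<le> spec_norm A * norm (B *v x)" by (rule spec_norm_bound)
  also have "\<dots> \<le> spec_norm A * (spec_norm B * norm x)"
    by (intro mult_left_mono spec_norm_bound spec_norm_ge0)
  finally show "norm ((A ** B) *v x) \<le> (spec_norm A * spec_norm B) * norm x" by (simp add: algebra_simps)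
qed

lemma mv_scaleR: "(r *\<^sub>R A) *v x = r *\<^sub>R (A *v x)" for A :: "complex^'n^'n"
  by (simp add: vec_eq_iff matrix_vector_mult_def scaleR_sum_right)

lemma mv_scaleR_right: "A *v (r *\<^sub>R x) = r *\<^sub>R (A *v x)" for A :: "complex^'n^'n"
  by (simp add: vec_eq_iff matrix_vector_mult_def scaleR_sum_right)

lemma spec_norm_scaleR: "spec_norm (r *\<^sub>R A) = \<bar>r\<bar> * spec_norm A"
  unfolding spec_norm_def mv_scaleR by (rule onorm_scaleR[OF mv_bl])

lemma spec_norm_one: "spec_norm (mat 1 :: complex^'n^'n) = 1"
proof -
  have "(*v) (mat 1 :: complex^'n^'n) = (\<lambda>x. x)" by (rule ext) simp
  then show ?thesis unfolding spec_norm_def by (simp add: onorm_id)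
qed

lemma entry_le_spec: "norm (A $ i $ j) \<le> spec_norm A"
proof -
  have "(A *v axis j 1) $ i = A $ i $ j"
    by (simp add: matrix_vector_mult_def axis_def if_distrib cong: if_cong)
  then have "norm (A $ i $ j) \<le> norm (A *v axis j 1)"
    unfolding norm_vec_def by (metis member_le_L2_set finite UNIV_I)
  also have "\<dots> \<le> spec_norm A * norm (axis j (1::complex))" by (rule spec_norm_bound)
  also have "norm (axis j (1::complex)) = 1"
  proof -
    have "(\<lambda>i. (norm (axis j (1::complex) $ i))^2) = (\<lambda>i. if i = j then 1 else 0)"
      by (auto simp: axis_def)
    then have "(\<Sum>i\<in>UNIV. (norm (axis j (1::complex) $ i))^2) = (\<Sum>i\<in>UNIV. if i = j then 1 else (0::real))"
      by (rule arg_cong[where f="\<lambda>f. sum f UNIV"])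
    then have "(\<Sum>i\<in>UNIV. (norm (axis j (1::complex) $ i))^2) = 1" by simp
    then show ?thesis by (simp add: norm_vec_def L2_set_def)
  qed
  finally show ?thesis by simp
qed

lemma norm_le_l1_vec: "norm (x :: 'a::real_normed_vector^'n) \<le> (\<Sum>i\<in>UNIV. norm (x $ i))"
  unfolding norm_vec_def by (rule L2_set_le_sum) simp

lemma norm_le_spec: "norm A \<le> real CARD('n) * real CARD('n) * spec_norm (A :: complex^'n^'n)"
proof -
  have "norm A \<le> (\<Sum>i\<in>UNIV. norm (A $ i))" by (rule norm_le_l1_vec)
  also have "\<dots> \<le> (\<Sum>i\<in>(UNIV::'n set). \<Sum>j\<in>(UNIV::'n set). norm (A $ i $ j))"
    by (intro sum_mono norm_le_l1_vec)
  also have "\<dots> \<le> (\<Sum>i\<in>(UNIV::'n set). \<Sum>j\<in>(UNIV::'n set). spec_norm A)"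
    by (intro sum_mono entry_le_spec)
  finally show ?thesis by simp
qed

lemma spec_le_norm: "\<exists>K. \<forall>A :: complex^'n^'n. spec_norm A \<le> K * norm A"
proof -
  have "bounded_bilinear (\<lambda>(A::complex^'n^'n) (x::complex^'n). A *v x)"
    by (rule bilinear_conv_bounded_bilinear[THEN iffD1])
       (simp add: bilinear_def linear_iff matrix_vector_mult_add_rdistrib matrix_vector_right_distrib mv_scaleR mv_scaleR_right)
  from bounded_bilinear.bounded[OF this] obtain K where K: "\<forall>(A::complex^'n^'n) (x::complex^'n). norm (A *v x) \<le> norm A * norm x * K"
    by blast
  show ?thesis
  proof (intro exI allI)
    fix A :: "complex^'n^'n"
    show "spec_norm A \<le> K * norm A"
      by (rule spec_norm_le) (use K in \<open>simp add: algebra_simps\<close>)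
  qed
qed

lemma spec_norm_eq_0: "spec_norm A = 0 \<longleftrightarrow> A = 0"
proof
  assume "spec_norm A = 0"
  then have "norm A \<le> 0" using norm_le_spec[of A] by simp
  then show "A = 0" by simp
qed (simp add: spec_norm_def onorm_zero)

lemma matrix_add_rdistrib': "((B + C) ** A) = (B ** A) + (C ** A)" for A B C :: "complex^'n^'n"
  by (vector matrix_matrix_mult_def sum.distrib[symmetric] field_simps)

lemma mat1_neq0: "(mat 1 :: complex^'n^'n) \<noteq> 0"
proof
  assume "(mat 1 :: complex^'n^'n) = 0"
  then have "(mat 1 :: complex^'n^'n) $ undefined $ undefined = 0" by simp
  then show False by (simp add: mat_def)
qed

instantiation cm :: (finite) ring_1
begin
lift_definition zero_cm :: "'a cm" is 0 .
lift_definition one_cm :: "'a cm" is "mat 1" .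
lift_definition plus_cm :: "'a cm \<Rightarrow> 'a cm \<Rightarrow> 'a cm" is "(+)" .
lift_definition minus_cm :: "'a cm \<Rightarrow> 'a cm \<Rightarrow> 'a cm" is "(-)" .
lift_definition uminus_cm :: "'a cm \<Rightarrow> 'a cm" is uminus .
lift_definition times_cm :: "'a cm \<Rightarrow> 'a cm \<Rightarrow> 'a cm" is "(**)" .
instance
proof
  fix a b c :: "'a cm"
  show "a * b * c = a * (b * c)" by transfer (simp add: matrix_mul_assoc)
  show "1 * a = a" by transfer simp
  show "a * 1 = a" by transfer simp
  show "(a + b) * c = a * c + b * c" by transfer (rule matrix_add_rdistrib')
  show "a * (b + c) = a * b + a * c" by transfer (rule matrix_add_ldistrib)
  show "(0::'a cm) \<noteq> 1" by transfer (metis mat1_neq0)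
  show "a + b + c = a + (b + c)" by transfer (simp add: add.assoc)
  show "a + b = b + a" by transfer (simp add: add.commute)
  show "0 + a = a" by transfer simp
  show "- a + a = 0" by transfer simp
  show "a - b = a + - b" by transfer simp
qed
end

instantiation cm :: (finite) real_vector
begin
lift_definition scaleR_cm :: "real \<Rightarrow> 'a cm \<Rightarrow> 'a cm" is scaleR .
instance
proof
  fix a b :: "'a cm" and r q :: real
  show "r *\<^sub>R (a + b) = r *\<^sub>R a + r *\<^sub>R b" by transfer (simp add: scaleR_right_distrib)
  show "(r + q) *\<^sub>R a = r *\<^sub>R a + q *\<^sub>R a" by transfer (simp add: scaleR_left_distrib)
  show "r *\<^sub>R q *\<^sub>R a = (r * q) *\<^sub>R a" by transfer simp
  show "1 *\<^sub>R a = a" by transfer simp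
qed
end

instantiation cm :: (finite) real_normed_vector
begin
definition norm_cm :: "'a cm \<Rightarrow> real" where "norm_cm x = spec_norm (M x)"
definition sgn_cm :: "'a cm \<Rightarrow> 'a cm" where "sgn_cm x = x /\<^sub>R norm x"
definition dist_cm :: "'a cm \<Rightarrow> 'a cm \<Rightarrow> real" where "dist_cm x y = norm (x - y)"
definition uniformity_cm :: "('a cm \<times> 'a cm) filter" where
  "uniformity_cm = (INF e\<in>{0 <..}. principal {(x, y). dist x y < e})"
definition open_cm :: "'a cm set \<Rightarrow> bool" where
  "open_cm U \<longleftrightarrow> (\<forall>x\<in>U. eventually (\<lambda>(x', y). x' = x \<longrightarrow> y \<in> U) uniformity)"
instance
proof
  fix a b :: "'a cm" and r :: real
  show "sgn a = inverse (norm a) *\<^sub>R a" by (simp add: sgn_cm_def)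
  show "uniformity = (INF e\<in>{0<..}. principal {(x::'a cm, y). dist x y < e})" by (simp add: uniformity_cm_def)
  show "dist a b = norm (a - b)" by (simp add: dist_cm_def)
  show "norm (a + b) \<le> norm a + norm b" unfolding norm_cm_def by transfer (rule spec_norm_triangle)
  show "norm (r *\<^sub>R a) = \<bar>r\<bar> * norm a" unfolding norm_cm_def by transfer (rule spec_norm_scaleR)
  show "(norm a = 0) = (a = 0)" unfolding norm_cm_def by transfer (rule spec_norm_eq_0)
next
  fix U :: "'a cm set"
  show "open U = (\<forall>x\<in>U. \<forall>\<^sub>F (x', y) in uniformity. x' = x \<longrightarrow> y \<in> U)" by (simp add: open_cm_def)
qed
end

instance cm :: (finite) real_normed_algebra_1
proof
  fix a b :: "'a cm" and r :: real
  show "r *\<^sub>R a * b = r *\<^sub>R (a * b)" by transfer (simp add: scalar_matrix_assoc)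
  show "a * r *\<^sub>R b = r *\<^sub>R (a * b)" by transfer (simp add: matrix_scalar_ac scalar_matrix_assoc)
  show "norm (a * b) \<le> norm a * norm b" unfolding norm_cm_def by transfer (rule spec_norm_mult)
  show "norm (1::'a cm) = 1" unfolding norm_cm_def by transfer (rule spec_norm_one)
qed

lemma norm_cm_eq: "norm x = spec_norm (M x)"
  by (simp add: norm_cm_def)

lemma M_add: "M (x + y) = M x + M y" by transfer simp
lemma M_diff: "M (x - y) = M x - M y" by transfer simp
lemma M_minus: "M (- x) = - M x" by transfer simp
lemma M_scaleR: "M (r *\<^sub>R x) = r *\<^sub>R M x" by transfer simp
lemma M_mult: "M (x * y) = M x ** M y" by transfer simp
lemma M_one: "M 1 = mat 1" by transfer simp
lemma M_zero: "M 0 = 0" by transfer simp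
lemma Abs_add: "Abs_cm (x + y) = Abs_cm x + Abs_cm y" by (simp add: plus_cm.abs_eq)
lemma Abs_scaleR: "Abs_cm (r *\<^sub>R x) = r *\<^sub>R Abs_cm x" by (simp add: scaleR_cm.abs_eq)

lemma bl_M: "bounded_linear (M :: 'n::finite cm \<Rightarrow> complex^'n^'n)"
proof (rule bounded_linear_intro[where K="real CARD('n) * real CARD('n)"])
  fix x :: "'n cm"
  show "norm (M x) \<le> norm x * (real CARD('n) * real CARD('n))"
    using norm_le_spec[of "M x"] by (simp add: norm_cm_eq mult.commute)
qed (simp_all add: M_add M_scaleR)

lemma bl_Abs: "bounded_linear (Abs_cm :: complex^'n^'n \<Rightarrow> 'n::finite cm)"
proof -
  obtain K where K: "\<forall>A :: complex^'n^'n. spec_norm A \<le> K * norm A" using spec_le_norm by blast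
  show ?thesis
  proof (rule bounded_linear_intro[where K=K])
    fix x :: "complex^'n^'n"
    show "norm (Abs_cm x) \<le> norm x * K"
      using K by (simp add: norm_cm_eq Abs_cm_inverse mult.commute)
  qed (simp_all add: Abs_add Abs_scaleR)
qed

instance cm :: (finite) banach
proof
  fix X :: "nat \<Rightarrow> 'a cm" assume "Cauchy X"
  then have "Cauchy (\<lambda>n. M (X n))" by (rule bounded_linear.Cauchy[OF bl_M])
  then obtain L where "(\<lambda>n. M (X n)) \<longlonglongrightarrow> L" using Cauchy_convergent_iff convergent_def by blast
  then have "(\<lambda>n. Abs_cm (M (X n))) \<longlonglongrightarrow> Abs_cm L" by (rule bounded_linear.tendsto[OF bl_Abs])
  then show "convergent X" by (auto simp add: M_inverse convergent_def)
qed

lemma M_pow: "M (x ^ n) = mat_pow (M x) n"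
  by (induction n) (simp_all add: M_one M_mult)

lemma exp_series_M: "(\<lambda>n. M (x ^ n /\<^sub>R fact n)) = (\<lambda>n. (1 / fact n) *\<^sub>R mat_pow (M x) n)"
  by (rule ext) (simp add: M_scaleR M_pow divide_inverse)

lemma mat_exp_M: "mat_exp (M x) = M (exp x)"
proof -
  have "M (exp x) = (\<Sum>n. M (x ^ n /\<^sub>R fact n))"
    unfolding exp_def by (rule bounded_linear.suminf[OF bl_M summable_exp_generic])
  then show ?thesis unfolding exp_series_M mat_exp_def by simp
qed

lemma summable_mat_exp: "summable (\<lambda>n. (1 / fact n) *\<^sub>R mat_pow (X :: complex^'n::finite^'n) n)"
proof -
  have "summable (\<lambda>n. M (Abs_cm X ^ n /\<^sub>R fact n))"
    by (rule bounded_linear.summable[OF bl_M summable_exp_generic])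
  then show ?thesis unfolding exp_series_M by (simp add: Abs_cm_inverse)
qed

lemma mat_exp_Abs: "mat_exp X = M (exp (Abs_cm X))"
  using mat_exp_M[of "Abs_cm X"] by (simp add: Abs_cm_inverse)

definition adj :: "complex^'n^'n \<Rightarrow> complex^'n^'n" where
  "adj A = (\<chi> i j. cnj (A $ j $ i))"

lemma adj_mult: "adj (A ** B) = adj B ** adj A"
  by (simp add: adj_def vec_eq_iff matrix_matrix_mult_def mult.commute)

lemma adj_mat1: "adj (mat 1) = mat 1"
  by (simp add: adj_def vec_eq_iff mat_def)

lemma mat_pow_commute: "mat_pow A n ** A = A ** mat_pow A n"
  by (induction n) (simp_all add: matrix_mul_assoc[symmetric])

lemma adj_pow: "adj (mat_pow X n) = mat_pow (adj X) n"
  by (induction n) (simp_all add: adj_mat1 adj_mult mat_pow_commute)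

lemma linear_adj: "linear adj"
  by (rule linearI) (simp_all add: adj_def vec_eq_iff)

lemma bl_adj: "bounded_linear (adj :: complex^'n::finite^'n \<Rightarrow> _)"
  using linear_adj linear_conv_bounded_linear by blast

lemma adj_scaleR: "adj (r *\<^sub>R A) = r *\<^sub>R adj A"
  by (simp add: adj_def vec_eq_iff)

lemma adj_mat_exp: "adj (mat_exp X) = mat_exp (adj X)"
proof -
  have "adj (mat_exp X) = (\<Sum>n. adj ((1 / fact n) *\<^sub>R mat_pow X n))"
    unfolding mat_exp_def by (rule bounded_linear.suminf[OF bl_adj summable_mat_exp])
  then show ?thesis unfolding mat_exp_def adj_scaleR adj_pow .
qed

definition cip :: "complex^'n \<Rightarrow> complex^'n \<Rightarrow> complex" where
  "cip x y = (\<Sum>i\<in>UNIV. x $ i * cnj (y $ i))"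

lemma cip_norm: "cip x x = of_real ((norm x)^2)"
proof -
  have "(norm x)^2 = (\<Sum>i\<in>UNIV. (norm (x $ i))^2)"
    unfolding norm_vec_def L2_set_def by (simp add: sum_nonneg)
  then have "of_real ((norm x)^2) = (\<Sum>i\<in>UNIV. of_real ((norm (x $ i))^2) :: complex)"
    by simp
  also have "\<dots> = cip x x" unfolding cip_def complex_norm_square ..
  finally show ?thesis by simp
qed

lemma cip_adj: "cip (U *v x) y = cip x (adj U *v y)"
proof -
  have "cip (U *v x) y = (\<Sum>i\<in>UNIV. \<Sum>j\<in>UNIV. U $ i $ j * x $ j * cnj (y $ i))"
    unfolding cip_def matrix_vector_mult_def by (simp add: sum_distrib_right)
  also have "\<dots> = (\<Sum>j\<in>UNIV. \<Sum>i\<in>UNIV. U $ i $ j * x $ j * cnj (y $ i))"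
    by (rule sum.swap)
  also have "\<dots> = cip x (adj U *v y)"
    unfolding cip_def matrix_vector_mult_def adj_def by (simp add: sum_distrib_left mult_ac)
  finally show ?thesis .
qed

lemma unitary_norm:
  assumes "adj U ** U = mat 1"
  shows "norm (U *v x) = norm x"
proof -
  have "cip (U *v x) (U *v x) = cip x x"
    unfolding cip_adj matrix_vector_mul_assoc assms by simp
  then have "complex_of_real ((norm (U *v x))^2) = complex_of_real ((norm x)^2)" unfolding cip_norm .
  then have "(norm (U *v x))^2 = (norm x)^2" by (simp only: of_real_eq_iff)
  then show ?thesis by (simp add: power2_eq_iff_nonneg)
qed

lemma hermitian_exp_contr:
  assumes "hermitian_mat A"
  shows "spec_norm (mat_exp (cmat_scale (\<i> * of_real t) A)) \<le> 1"
proof -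
  define Z where "Z = cmat_scale (\<i> * of_real t) A"
  have h: "cnj (A $ j $ i) = A $ i $ j" for i j
    using assms unfolding hermitian_mat_def by metis
  have adjZ: "adj Z = - Z"
    unfolding Z_def adj_def cmat_scale_def
    by (simp add: vec_eq_iff h)
  have "adj (mat_exp Z) ** mat_exp Z = mat 1"
  proof -
    have a1: "adj (mat_exp Z) = mat_exp (- Z)" by (simp only: adj_mat_exp adjZ)
    have a2: "Abs_cm (- Z) = - Abs_cm Z"
      by (rule M_inject[THEN iffD1]) (simp add: M_minus Abs_cm_inverse)
    have "adj (mat_exp Z) ** mat_exp Z = M (exp (- Abs_cm Z)) ** M (exp (Abs_cm Z))"
      unfolding a1 by (simp only: mat_exp_Abs a2)
    also have "\<dots> = M (exp (- Abs_cm Z) * exp (Abs_cm Z))" by (simp add: M_mult)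
    also have "exp (- Abs_cm Z) * exp (Abs_cm Z) = 1"
      using exp_minus_inverse[of "- Abs_cm Z"] by simp
    finally show ?thesis by (simp add: M_one)
  qed
  then have "\<And>x. norm (mat_exp Z *v x) \<le> 1 * norm x" by (simp add: unitary_norm)
  then show ?thesis unfolding Z_def[symmetric] by (rule spec_norm_le)
qed

lemma csR: "u *\<^sub>R (z::complex) = of_real u * z"
  by (simp add: scaleR_conv_of_real)

lemma cs_scale: "cmat_scale (c * of_real u) A = u *\<^sub>R cmat_scale c A"
  by (simp add: vec_eq_iff cmat_scale_def csR mult_ac)

lemma cs_mv: "(cmat_scale c A *v x) $ i = c * (A *v x) $ i"
  by (simp add: cmat_scale_def matrix_vector_mult_def sum_distrib_left mult.assoc)

lemma cs_norm_mv: "cmod c = 1 \<Longrightarrow> norm (cmat_scale c A *v x) = norm (A *v x)"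
  by (simp add: norm_vec_def cs_mv norm_mult)

lemma spec_norm_cs: "cmod c = 1 \<Longrightarrow> spec_norm (cmat_scale c A) = spec_norm A"
proof (rule antisym)
  assume c: "cmod c = 1"
  show "spec_norm (cmat_scale c A) \<le> spec_norm A"
    by (rule spec_norm_le) (simp add: cs_norm_mv[OF c] spec_norm_bound)
  show "spec_norm A \<le> spec_norm (cmat_scale c A)"
    by (rule spec_norm_le) (metis cs_norm_mv[OF c] spec_norm_bound)
qed

lemma hermitian_comm:
  assumes hA: "hermitian_mat A" and hB: "hermitian_mat B"
  shows "hermitian_mat (cmat_scale \<i> (A ** B - B ** A))"
proof -
  have hA': "cnj (A $ j $ i) = A $ i $ j" for i j using hA unfolding hermitian_mat_def by metis
  have hB': "cnj (B $ j $ i) = B $ i $ j" for i j using hB unfolding hermitian_mat_def by metis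
  show ?thesis
    unfolding hermitian_mat_def cmat_scale_def matrix_matrix_mult_def
    by (simp add: hA' hB' sum_subtractf algebra_simps)
qed

lemma M_exp_scale: "mat_exp (cmat_scale (c * of_real u) A) = M (exp (u *\<^sub>R Abs_cm (cmat_scale c A)))"
  by (simp add: cs_scale mat_exp_Abs Abs_scaleR)

theorem mainTheorem11:
  fixes A B :: "complex^'n^'n" and dt :: real
  assumes "hermitian_mat A" and "hermitian_mat B" and "dt \<ge> 0"
  defines "H \<equiv> cmat_scale \<i> (A ** B - B ** A)"
  defines "S \<equiv> (\<lambda>t::real. mat_exp (cmat_scale (\<i> * of_real t) B) ** mat_exp (cmat_scale (\<i> * of_real t) A)
                  ** mat_exp (cmat_scale (- \<i> * of_real t) B) ** mat_exp (cmat_scale (- \<i> * of_real t) A))"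
  shows "spec_norm (S (sqrt (dt / 2)) ** S (- sqrt (dt / 2)) - mat_exp (cmat_scale (- \<i> * of_real dt) H))
           \<le> (8 / 3 * (spec_norm A + spec_norm B) ^ 4 + 1 / 2 * (spec_norm H)\<^sup>2) * dt\<^sup>2"
proof -
  define Xc where "Xc = Abs_cm (cmat_scale \<i> A)"
  define Yc where "Yc = Abs_cm (cmat_scale \<i> B)"
  define D where "D = Yc * Xc - Xc * Yc"
  define s where "s = sqrt (dt / 2)"
  have s0: "s \<ge> 0" unfolding s_def using assms(3) by simp
  have dts: "dt = 2 * s^2" unfolding s_def using assms(3) by simp
  have eA: "mat_exp (cmat_scale (\<i> * of_real u) A) = M (exp (u *\<^sub>R Xc))" for u
    unfolding Xc_def by (rule M_exp_scale)
  have eB: "mat_exp (cmat_scale (\<i> * of_real u) B) = M (exp (u *\<^sub>R Yc))" for u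
    unfolding Yc_def by (rule M_exp_scale)
  have mi: "- \<i> * of_real u = \<i> * of_real (- u)" for u by simp
  have SS: "S s ** S (- s) = M ((exp (s *\<^sub>R Yc) * exp (s *\<^sub>R Xc) * exp ((-s) *\<^sub>R Yc) * exp ((-s) *\<^sub>R Xc)) *
               (exp ((-s) *\<^sub>R Yc) * exp ((-s) *\<^sub>R Xc) * exp (s *\<^sub>R Yc) * exp (s *\<^sub>R Xc)))"
    unfolding S_def mi eA eB by (simp add: M_mult)
  have MXc: "M Xc = cmat_scale \<i> A" unfolding Xc_def by (simp add: Abs_cm_inverse)
  have MYc: "M Yc = cmat_scale \<i> B" unfolding Yc_def by (simp add: Abs_cm_inverse)
  have MD: "M D = cmat_scale (- \<i>) H"
    unfolding D_def M_diff M_mult MXc MYc H_def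
    by (simp add: vec_eq_iff cmat_scale_def matrix_matrix_mult_def sum_distrib_left sum_subtractf sum_negf algebra_simps)
  have eH: "mat_exp (cmat_scale (- \<i> * of_real dt) H) = M (exp ((2 * s^2) *\<^sub>R D))"
  proof -
    have "cmat_scale (- \<i> * of_real dt) H = M (dt *\<^sub>R D)"
      by (simp only: cs_scale M_scaleR MD)
    then show ?thesis by (simp add: mat_exp_M dts)
  qed
  have nX: "norm Xc = spec_norm A" unfolding norm_cm_eq MXc by (rule spec_norm_cs) simp
  have nY: "norm Yc = spec_norm B" unfolding norm_cm_eq MYc by (rule spec_norm_cs) simp
  have nD: "norm D = spec_norm H" unfolding norm_cm_eq MD by (rule spec_norm_cs) simp
  have hH: "hermitian_mat H" unfolding H_def by (rule hermitian_comm[OF assms(1,2)])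
  have cX: "norm (exp (u *\<^sub>R Xc)) \<le> 1" for u
    unfolding norm_cm_eq eA[symmetric] by (rule hermitian_exp_contr[OF assms(1)])
  have cY: "norm (exp (u *\<^sub>R Yc)) \<le> 1" for u
    unfolding norm_cm_eq eB[symmetric] by (rule hermitian_exp_contr[OF assms(2)])
  have cD: "norm (exp (u *\<^sub>R (Yc * Xc - Xc * Yc))) \<le> 1" for u
  proof -
    have "M (exp (u *\<^sub>R D)) = mat_exp (cmat_scale (\<i> * of_real (- u)) H)"
      by (simp add: mat_exp_M[symmetric] M_scaleR MD cs_scale[symmetric])
    then show ?thesis unfolding norm_cm_eq D_def[symmetric] using hermitian_exp_contr[OF hH, of "- u"] by simp
  qed
  have main: "norm ((exp (s *\<^sub>R Yc) * exp (s *\<^sub>R Xc) * exp ((-s) *\<^sub>R Yc) * exp ((-s) *\<^sub>R Xc)) *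
               (exp ((-s) *\<^sub>R Yc) * exp ((-s) *\<^sub>R Xc) * exp (s *\<^sub>R Yc) * exp (s *\<^sub>R Xc))
               - exp ((2 * s^2) *\<^sub>R D))
         \<le> 32/3 * (norm Xc + norm Yc)^4 * s^4 + 2 * s^4 * (norm D)^2"
    unfolding D_def by (rule abstract_main[OF cX cY cD s0])
  have s4: "s^4 = dt^2 / 4" unfolding dts by (simp add: power2_eq_square power4_eq_xxxx)
  show ?thesis
    unfolding s_def[symmetric] SS eH M_diff[symmetric] norm_cm_eq[symmetric]
    using main unfolding nX nY nD s4 by (simp add: algebra_simps)
qed

end
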